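(* Let $D$ be a friendship digraph. Then $D^{\leftarrow}$ is a friendship digraph. Equivalently, in a friendship digraph any two distinct vertices have exactly one common in-neighbor.
   Context: All digraphs are finite and have neither loops nor parallel arcs (a pair of opposite arcs $(u,v)$ and $(v,u)$ is allowed). A friendship digraph is a nontrivial digraph (at least two vertices) in which any two distinct vertices have exactly one common out-neighbor. For a digraph $D$, $D^{\leftarrow}$ is the digraph with $V(D^{\leftarrow})=V(D)$ and $(u,v)\in A(D^{\leftarrow})$ if and only if $(v,u)\in A(D)$. *)

theory Defs
  imports Main
begin

text \<open>A digraph is a finite vertex set V together with an arc set A \<subseteq> V \<times> V
  without loops (parallel arcs are excluded automatically since A is a set;
  opposite arcs (u,v),(v,u) are allowed).\<close>

definition digraph :: "'a set \<Rightarrow> ('a \<times> 'a) set \<Rightarrow> bool" where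
  "digraph V A \<longleftrightarrow> finite V \<and> A \<subseteq> V \<times> V \<and> (\<forall>v. (v, v) \<notin> A)"

definition out_neighbors :: "'a set \<Rightarrow> ('a \<times> 'a) set \<Rightarrow> 'a \<Rightarrow> 'a set" where
  "out_neighbors V A u = {w \<in> V. (u, w) \<in> A}"

definition friendship_digraph :: "'a set \<Rightarrow> ('a \<times> 'a) set \<Rightarrow> bool" where
  "friendship_digraph V A \<longleftrightarrow> digraph V A \<and> card V \<ge> 2 \<and>
     (\<forall>u\<in>V. \<forall>v\<in>V. u \<noteq> v \<longrightarrow>
        card (out_neighbors V A u \<inter> out_neighbors V A v) = 1)"

definition reverse_arcs :: "('a \<times> 'a) set \<Rightarrow> ('a \<times> 'a) set" where
  "reverse_arcs A = {(v, u). (u, v) \<in> A}"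

end

theory Submission
  imports Defs Complex_Main
begin

locale fdg =
  fixes V :: "'a set" and A :: "('a \<times> 'a) set"
  assumes fd: "friendship_digraph V A"
begin

definition outs where "outs x = {w \<in> V. (x, w) \<in> A}"
definition ins where "ins w = {x \<in> V. (x, w) \<in> A}"

lemma fin: "finite V" using fd unfolding friendship_digraph_def digraph_def by auto
lemma sub: "A \<subseteq> V \<times> V" using fd unfolding friendship_digraph_def digraph_def by auto
lemma noloop: "(v, v) \<notin> A" using fd unfolding friendship_digraph_def digraph_def by auto
lemma card2: "card V \<ge> 2" using fd unfolding friendship_digraph_def by auto
lemma one: "u \<in> V \<Longrightarrow> v \<in> V \<Longrightarrow> u \<noteq> v \<Longrightarrow> card (outs u \<inter> outs v) = 1"
  using fd unfolding friendship_digraph_def outs_def out_neighbors_def by auto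

lemma uniq:
  assumes "x \<in> V" "y \<in> V" "x \<noteq> y" "(x,w) \<in> A" "(y,w) \<in> A" "(x,w') \<in> A" "(y,w') \<in> A"
  shows "w = w'"
proof -
  have "w \<in> outs x \<inter> outs y" "w' \<in> outs x \<inter> outs y"
    using assms sub unfolding outs_def by auto
  moreover have "card (outs x \<inter> outs y) = 1" using one assms by auto
  ultimately show ?thesis by (metis card_1_singletonE singletonD)
qed

lemma rpos: assumes "x \<in> V" shows "card (outs x) \<ge> 1"
proof -
  have "card (V - {x}) \<ge> 1" using card2 fin assms by (simp add: card_Diff_singleton)
  then have "V - {x} \<noteq> {}" by (metis card.empty not_one_le_zero)
  then obtain y where "y \<in> V" "y \<noteq> x" by auto
  then have "card (outs x \<inter> outs y) = 1" using one assms by auto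
  then have "outs x \<noteq> {}" by auto
  moreover have "finite (outs x)" using fin unfolding outs_def by auto
  ultimately show ?thesis by (simp add: Suc_leI card_gt_0_iff)
qed

lemma rlt: "x \<in> V \<Longrightarrow> card (outs x) < card V"
  unfolding outs_def using noloop fin by (intro psubset_card_mono) auto
lemma klt: "x \<in> V \<Longrightarrow> card (ins x) < card V"
  unfolding ins_def using noloop fin by (intro psubset_card_mono) auto

definition f where "f x z = the_elem (outs x \<inter> outs z)"

lemma f_mem:
  assumes "x \<in> V" "w \<in> V" "(x,w) \<notin> A" "z \<in> ins w"
  shows "f x z \<in> outs x \<inter> outs z"
proof -
  have "z \<in> V" "z \<noteq> x" using assms unfolding ins_def by auto
  then have "card (outs x \<inter> outs z) = 1" using one assms by auto
  then show ?thesis unfolding f_def by (metis card_1_singletonE insertI1 the_elem_eq)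
qed

lemma f_inj:
  assumes "x \<in> V" "w \<in> V" "(x,w) \<notin> A"
  shows "inj_on (f x) (ins w)"
proof
  fix z z' assume z: "z \<in> ins w" and z': "z' \<in> ins w" and e: "f x z = f x z'"
  show "z = z'"
  proof (rule ccontr)
    assume ne: "z \<noteq> z'"
    have a: "f x z \<in> outs x \<inter> outs z" "f x z' \<in> outs x \<inter> outs z'"
      using f_mem assms z z' by auto
    have "f x z = w"
      apply (rule uniq[of z z'])
      using a e z z' ne unfolding ins_def outs_def by auto
    then show False using a assms unfolding outs_def by auto
  qed
qed

lemma f_img:
  assumes "x \<in> V" "w \<in> V" "(x,w) \<notin> A"
  shows "f x ` ins w \<subseteq> outs x"
  using f_mem[OF assms] by auto

lemma k_le_r:
  assumes "x \<in> V" "w \<in> V" "(x,w) \<notin> A"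
  shows "card (ins w) \<le> card (outs x)"
proof -
  have "card (f x ` ins w) = card (ins w)" using f_inj[OF assms] card_image by blast
  moreover have "card (f x ` ins w) \<le> card (outs x)"
    using f_img[OF assms] fin by (intro card_mono) (auto simp: outs_def)
  ultimately show ?thesis by simp
qed

definition g :: "nat \<Rightarrow> real" where "g t = real t / (real (card V) - real t)"

lemma g_mono: "a < card V \<Longrightarrow> b < card V \<Longrightarrow> a \<le> b \<Longrightarrow> g a \<le> g b"
  unfolding g_def by (auto simp: divide_simps intro!: mult_mono)

lemma g_strict: assumes "a < card V" "b < card V" "a < b" shows "g a < g b"
proof -
  have "real a * real (card V) < real b * real (card V)" using assms by auto
  then have "real a * (real (card V) - real b) < real b * (real (card V) - real a)"
    by (simp add: algebra_simps)
  then show ?thesis using assms unfolding g_def by (auto simp: divide_simps)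
qed

lemma g_inj: "a < card V \<Longrightarrow> b < card V \<Longrightarrow> g a = g b \<Longrightarrow> a = b"
  by (metis g_strict less_irrefl linorder_neqE_nat)

lemma gtimes: "a < card V \<Longrightarrow> (real (card V) - real a) * g a = real a"
  unfolding g_def by auto

lemma sum_out: "x \<in> V \<Longrightarrow> (\<Sum>w\<in>V. if (x,w) \<notin> A then h else 0) = real (card V - card (outs x)) * h"
proof -
  assume x: "x \<in> V"
  have "(\<Sum>w\<in>V. if (x,w) \<notin> A then h else 0) = (\<Sum>w\<in>V - outs x. h)"
    using fin by (intro sum.mono_neutral_cong_right) (auto simp: outs_def)
  also have "\<dots> = real (card (V - outs x)) * h" by simp
  also have "card (V - outs x) = card V - card (outs x)"
    using fin by (intro card_Diff_subset) (auto simp: outs_def)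
  finally show ?thesis .
qed

lemma sum_in: "w \<in> V \<Longrightarrow> (\<Sum>x\<in>V. if (x,w) \<notin> A then h else 0) = real (card V - card (ins w)) * h"
proof -
  assume x: "w \<in> V"
  have "(\<Sum>x\<in>V. if (x,w) \<notin> A then h else 0) = (\<Sum>x\<in>V - ins w. h)"
    using fin by (intro sum.mono_neutral_cong_right) (auto simp: ins_def)
  also have "\<dots> = real (card (V - ins w)) * h" by simp
  also have "card (V - ins w) = card V - card (ins w)"
    using fin by (intro card_Diff_subset) (auto simp: ins_def)
  finally show ?thesis .
qed

lemma card_out_sum: "x \<in> V \<Longrightarrow> real (card (outs x)) = (\<Sum>w\<in>V. if (x,w) \<in> A then 1 else 0)"
  using fin by (simp add: sum.If_cases outs_def Int_def)

lemma card_in_sum: "w \<in> V \<Longrightarrow> real (card (ins w)) = (\<Sum>x\<in>V. if (x,w) \<in> A then 1 else 0)"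
  using fin by (simp add: sum.If_cases ins_def Int_def)

lemma key:
  assumes "x \<in> V" "w \<in> V" "(x,w) \<notin> A"
  shows "card (ins w) = card (outs x)"
proof -
  define T where "T x w = (if (x,w) \<notin> A then g (card (outs x)) - g (card (ins w)) else 0)" for x w
  have nn: "T x w \<ge> 0" if "x \<in> V" "w \<in> V" for x w
    using that k_le_r[of x w] g_mono rlt klt unfolding T_def by auto
  have s1: "(\<Sum>x\<in>V. \<Sum>w\<in>V. if (x,w) \<notin> A then g (card (outs x)) else 0) = (\<Sum>x\<in>V. real (card (outs x)))"
    by (intro sum.cong refl) (simp add: sum_out gtimes rlt of_nat_diff less_imp_le)
  have s2: "(\<Sum>x\<in>V. \<Sum>w\<in>V. if (x,w) \<notin> A then g (card (ins w)) else 0) = (\<Sum>w\<in>V. real (card (ins w)))"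
    by (subst sum.swap) (intro sum.cong refl, simp add: sum_in gtimes klt of_nat_diff less_imp_le)
  have s3: "(\<Sum>x\<in>V. real (card (outs x))) = (\<Sum>w\<in>V. real (card (ins w)))"
    by (simp add: card_out_sum card_in_sum cong: sum.cong) (rule sum.swap)
  have "(\<Sum>x\<in>V. \<Sum>w\<in>V. T x w) = (\<Sum>x\<in>V. \<Sum>w\<in>V. if (x,w) \<notin> A then g (card (outs x)) else 0)
     - (\<Sum>x\<in>V. \<Sum>w\<in>V. if (x,w) \<notin> A then g (card (ins w)) else 0)"
    unfolding T_def by (simp add: sum_subtractf[symmetric] if_distrib cong: if_cong)
  then have z: "(\<Sum>x\<in>V. \<Sum>w\<in>V. T x w) = 0" using s1 s2 s3 by simp
  have "\<forall>x\<in>V. (\<Sum>w\<in>V. T x w) = 0"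
    using z fin nn by (subst sum_nonneg_eq_0_iff[symmetric]) (auto intro: sum_nonneg)
  then have "T x w = 0" using assms fin nn by (simp add: sum_nonneg_eq_0_iff)
  then have "g (card (outs x)) = g (card (ins w))" using assms unfolding T_def by simp
  then show ?thesis using g_inj rlt klt assms by metis
qed

lemma main:
  assumes "u \<in> V" "v \<in> V" "u \<noteq> v"
  shows "card (ins u \<inter> ins v) = 1"
proof -
  have "ins u \<noteq> {}"
  proof
    assume e: "ins u = {}"
    have "(u,u) \<notin> A" using noloop by auto
    then have "card (outs u) = 0" using key[of u u] assms e by simp
    then show False using rpos assms by force
  qed
  then obtain y where y: "y \<in> ins u" by auto
  have "\<exists>z. z \<in> ins u \<inter> ins v"
  proof (cases "y \<in> ins v")
    case True then show ?thesis using y by blast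
  next
    case False
    then have yv: "(y,v) \<notin> A" "y \<in> V" using y unfolding ins_def by auto
    have "f y ` ins v = outs y"
    proof (rule card_subset_eq)
      show "finite (outs y)" using fin by (simp add: outs_def)
      show "f y ` ins v \<subseteq> outs y" by (rule f_img[OF yv(2) assms(2) yv(1)])
      show "card (f y ` ins v) = card (outs y)"
        using key[OF yv(2) assms(2) yv(1)] f_inj[OF yv(2) assms(2) yv(1)] by (simp add: card_image)
    qed
    moreover have "u \<in> outs y" using y assms unfolding ins_def outs_def by auto
    ultimately obtain z where z: "z \<in> ins v" "u = f y z" by auto
    then have "u \<in> outs z" using f_mem[OF yv(2) assms(2) yv(1)] by auto
    then show ?thesis using z unfolding ins_def outs_def by auto
  qed
  then obtain z where z: "z \<in> ins u \<inter> ins v" by auto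
  have "ins u \<inter> ins v = {z}"
  proof (rule ccontr)
    assume "ins u \<inter> ins v \<noteq> {z}"
    then obtain z' where "z' \<in> ins u \<inter> ins v" "z' \<noteq> z" using z by auto
    then have "u = v" using z uniq[of z z' u v] unfolding ins_def by auto
    then show False using assms by simp
  qed
  then show ?thesis by simp
qed

end

theorem theorem2p4:
  assumes "friendship_digraph V A"
  shows "friendship_digraph V (reverse_arcs A)"
proof -
  interpret fdg V A using assms by unfold_locales
  have d: "digraph V (reverse_arcs A)"
    using fin sub noloop unfolding digraph_def reverse_arcs_def by auto
  have o: "out_neighbors V (reverse_arcs A) u = ins u" for u
    unfolding out_neighbors_def ins_def reverse_arcs_def by auto
  show ?thesis unfolding friendship_digraph_def o using d card2 main by auto
qed

end
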